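(* Let $q$ be an odd prime power, $n\ge3$ an odd integer and $s$ an integer with $\gcd(s,2n)=1$. Let $\gamma\in\mathbb{F}_{q^{2n}}$ be such that $\mathrm{N}_{q^{2n}/q}(\gamma)$ is a non-square in $\mathbb{F}_q$. Then $$\tilde{\mathcal{H}}_s=\Big\{bx^{q^{2s\frac{n+1}{2}}}+a\gamma x^{q^{2s\frac{n-1}{2}}}+(a\gamma)^{q^{s(n+2)}}x^{q^{2s\frac{n+3}{2}}}+\sum_{i=1}^{\frac{n-3}{2}}\Big(c_ix^{q^{2si}}+c_i^{q^{s(2n-2i+1)}}x^{q^{2s(n-i+1)}}\Big): a,b\in\mathbb{F}_{q^n},\ c_i\in\mathbb{F}_{q^{2n}}\Big\}$$ is a maximum Hermitian $\mathbb{F}_q$-linear $2$-code; that is, it is an $\mathbb{F}_q$-linear set of size $q^{n(n-1)}$ every nonzero element of which has rank at least $2$.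
   Context: Polynomials are linearized polynomials over $\mathbb{F}_{q^{2n}}$ taken modulo $x^{q^{2n}}-x$, regarded as $\mathbb{F}_{q^2}$-linear maps $\mathbb{F}_{q^{2n}}\to\mathbb{F}_{q^{2n}}$; the rank of such $f$ is the $\mathbb{F}_{q^2}$-dimension of its image. $\mathrm{N}_{q^{2n}/q}(x)=x^{(q^{2n}-1)/(q-1)}$. For an additive Hermitian $2$-code the size is at most $q^{n(n-1)}$, so size $q^{n(n-1)}$ is maximum. *)

theory Defs
  imports "HOL-Computational_Algebra.Primes" "HOL-Library.Cardinality"
begin

text \<open>The ambient field is a finite field of type 'a with CARD('a) = q^(2n).
  A linearized monomial x^(q^k) with integer k is the map x \<mapsto> x^(q^(k mod 2n));
  this is the same map on F_(q^(2n)) (and matches reduction modulo x^(q^(2n)) - x).\<close>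

definition frob :: "nat \<Rightarrow> nat \<Rightarrow> int \<Rightarrow> 'a::field \<Rightarrow> 'a" where
  "frob q n k x = x ^ (q ^ nat (k mod (2 * int n)))"

definition subfield_el :: "nat \<Rightarrow> 'a::field set" where
  "subfield_el Q = {x. x ^ Q = x}"

definition normq :: "nat \<Rightarrow> nat \<Rightarrow> 'a::field \<Rightarrow> 'a" where
  "normq q n x = x ^ ((q ^ (2 * n) - 1) div (q - 1))"

definition lin_indep_over :: "'a::field set \<Rightarrow> 'a set \<Rightarrow> bool" where
  "lin_indep_over K S \<longleftrightarrow> finite S \<and>
     (\<forall>c. (\<forall>v\<in>S. c v \<in> K) \<longrightarrow> (\<Sum>v\<in>S. c v * v) = 0 \<longrightarrow> (\<forall>v\<in>S. c v = 0))"

definition dim_over :: "'a::field set \<Rightarrow> 'a set \<Rightarrow> nat" where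
  "dim_over K V = Max {card S | S. S \<subseteq> V \<and> lin_indep_over K S}"

definition hrank :: "nat \<Rightarrow> ('a::{field,finite} \<Rightarrow> 'a) \<Rightarrow> nat" where
  "hrank q f = dim_over (subfield_el (q^2)) (range f)"

definition Htilde :: "nat \<Rightarrow> nat \<Rightarrow> int \<Rightarrow> 'a::{field,finite} \<Rightarrow> ('a \<Rightarrow> 'a) set" where
  "Htilde q n s \<gamma> =
    {(\<lambda>x. b * frob q n (2 * s * ((int n + 1) div 2)) x
        + a * \<gamma> * frob q n (2 * s * ((int n - 1) div 2)) x
        + frob q n (s * (int n + 2)) (a * \<gamma>) * frob q n (2 * s * ((int n + 3) div 2)) x
        + (\<Sum>i\<in>{1..(n - 3) div 2}.
             c i * frob q n (2 * s * int i) x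
           + frob q n (s * (2 * int n - 2 * int i + 1)) (c i)
               * frob q n (2 * s * (int n - int i + 1)) x))
     | a b c. a \<in> subfield_el (q ^ n) \<and> b \<in> subfield_el (q ^ n)}"

end

theory Submission
  imports Defs "HOL-Number_Theory.Residues" "HOL-Computational_Algebra.Polynomial"
begin

lemma char_prime_eq:
  assumes "prime p" "k > 0" "CARD('a::{field,finite}) = p ^ k"
  shows "CHAR('a) = p"
proof -
  have pos: "CHAR('a) > 0" by (rule finite_imp_CHAR_pos) simp
  have pr: "prime CHAR('a)" using prime_CHAR_semidom[OF pos] .
  have "CHAR('a) dvd p ^ k" using CHAR_dvd_CARD[where 'a='a] assms(3) by simp
  hence "CHAR('a) dvd p" using pr prime_dvd_power by blast
  thus ?thesis using pr assms(1) primes_dvd_imp_eq by blast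
qed

lemma field_pow_card:
  fixes x :: "'a::{field,finite}"
  shows "x ^ CARD('a) = x"
proof (cases "x = 0")
  case False
  have "x * (\<Prod>y\<in>UNIV-{0}. x * y) = x * x ^ (card (UNIV :: 'a set) - 1) * \<Prod>(UNIV-{0})"
    by (simp add: prod.distrib mult_ac)
  also have "x * x ^ (card (UNIV :: 'a set) - 1) = x ^ Suc (card (UNIV :: 'a set) - 1)"
    by (subst power_Suc) auto
  also have "Suc (card (UNIV :: 'a set) - 1) = card (UNIV :: 'a set)"
    using finite_UNIV_card_ge_0[where ?'a = 'a] by simp
  also have "(\<Prod>y\<in>UNIV-{0}. x * y) = (\<Prod>y\<in>UNIV-{0}. y)"
    by (rule prod.reindex_bij_witness[of _ "\<lambda>y. y / x" "\<lambda>y. x * y"]) (use False in auto)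
  finally show ?thesis
    by simp
qed (use finite_UNIV_card_ge_0[where ?'a = 'a] in auto)

lemma frob_add_pow:
  assumes "prime p" "CHAR('a::{field,finite}) = p" "q = p ^ k"
  shows "((x::'a) + y) ^ (q ^ j) = x ^ (q ^ j) + y ^ (q ^ j)"
  using assms by (intro freshmans_dream') (auto simp: power_mult[symmetric])

lemma frob_sum_pow:
  assumes "prime p" "CHAR('a::{field,finite}) = p" "q = p ^ k"
  shows "(sum (f :: 'b \<Rightarrow> 'a) A) ^ (q ^ j) = (\<Sum>i\<in>A. f i ^ (q ^ j))"
  using assms by (intro freshmans_dream_sum') (auto simp: power_mult[symmetric])


definition LP :: "nat \<Rightarrow> nat \<Rightarrow> (nat \<Rightarrow> 'a::field) \<Rightarrow> 'a \<Rightarrow> 'a" where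
  "LP q n \<beta> x = (\<Sum>e<2*n. \<beta> e * x ^ (q ^ e))"

context
  fixes q n :: nat
  assumes q_gt1: "q > 1" and n_pos: "n > 0"
    and fadd: "\<And>(x::'a::{field,finite}) y j. (x + y) ^ (q ^ j) = x ^ (q ^ j) + y ^ (q ^ j)"
    and cardF: "CARD('a) = q ^ (2 * n)"
begin

lemma fsum: "(sum (f :: 'b \<Rightarrow> 'a) A) ^ (q ^ j) = (\<Sum>i\<in>A. f i ^ (q ^ j))"
  by (induction A rule: infinite_finite_induct) (use q_gt1 in \<open>auto simp: fadd\<close>)

lemma fneg: "(- (x::'a)) ^ (q ^ j) = - (x ^ (q ^ j))"
proof -
  have "(x + - x) ^ (q ^ j) = x ^ (q ^ j) + (- x) ^ (q ^ j)" by (rule fadd)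
  moreover have "(0::'a) ^ (q ^ j) = 0" using q_gt1 by simp
  ultimately have "x ^ (q ^ j) + (- x) ^ (q ^ j) = 0" by simp
  thus ?thesis by (simp only: add_eq_0_iff)
qed

lemma fcard: "(x::'a) ^ (q ^ (2 * n)) = x"
  using field_pow_card[of x] cardF by simp

lemma fcard_mult: "(x::'a) ^ (q ^ (2 * n * d)) = x"
proof (induction d)
  case (Suc d)
  have "x ^ (q ^ (2 * n * Suc d)) = (x ^ (q ^ (2 * n * d))) ^ (q ^ (2 * n))"
    by (simp add: power_mult[symmetric] power_add[symmetric] algebra_simps)
  thus ?case using Suc fcard by simp
qed simp

lemma fred: "(x::'a) ^ (q ^ k) = x ^ (q ^ (k mod (2 * n)))"
proof -
  have "q ^ k = q ^ (2 * n * (k div (2 * n))) * q ^ (k mod (2 * n))"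
    by (metis power_add div_mult_mod_eq mult.commute)
  hence "x ^ (q ^ k) = (x ^ (q ^ (2 * n * (k div (2 * n))))) ^ (q ^ (k mod (2 * n)))"
    by (simp only: power_mult)
  thus ?thesis by (simp only: fcard_mult)
qed

lemma LP_unique:
  assumes "\<And>x. LP q n \<beta> (x::'a) = LP q n \<gamma> x" "e < 2 * n"
  shows "\<beta> e = \<gamma> e"
proof -
  define \<delta> where "\<delta> = (\<lambda>e. \<beta> e - \<gamma> e)"
  define p where "p = (\<Sum>e<2*n. monom (\<delta> e) (q ^ e))"
  have inj: "q ^ a = q ^ b \<longleftrightarrow> a = b" for a b using q_gt1 by simp
  have coeffp: "coeff p i = (\<Sum>e<2*n. if q ^ e = i then \<delta> e else 0)" for i
    unfolding p_def coeff_sum by simp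
  have coeffe: "coeff p (q ^ e') = \<delta> e'" if "e' < 2 * n" for e'
    unfolding coeffp inj using that by (simp add: sum.delta)
  have polyp: "poly p x = 0" for x
  proof -
    have "poly p x = (\<Sum>e<2*n. \<delta> e * x ^ (q ^ e))"
      unfolding p_def poly_sum poly_monom by simp
    also have "\<dots> = LP q n \<beta> x - LP q n \<gamma> x"
      unfolding LP_def \<delta>_def by (simp add: sum_subtractf algebra_simps)
    finally show ?thesis using assms(1) by simp
  qed
  have "p = 0"
  proof (rule ccontr)
    assume "p \<noteq> 0"
    hence "card {x::'a. poly p x = 0} \<le> degree p" by (rule card_poly_roots_bound)
    hence c1: "q ^ (2 * n) \<le> degree p" using polyp cardF by simp
    have "degree p \<le> q ^ (2 * n - 1)"
    proof (rule degree_le, intro allI impI)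
      fix i assume i: "q ^ (2 * n - 1) < i"
      have "q ^ e \<noteq> i" if "e < 2 * n" for e
      proof -
        have "q ^ e \<le> q ^ (2 * n - 1)" using that q_gt1 by (intro power_increasing) auto
        thus ?thesis using i by auto
      qed
      thus "coeff p i = 0" unfolding coeffp by (intro sum.neutral) auto
    qed
    moreover have "q ^ (2 * n - 1) < q ^ (2 * n)" using q_gt1 n_pos by (intro power_strict_increasing) auto
    ultimately show False using c1 by simp
  qed
  hence "\<delta> e = 0" using coeffe[OF assms(2)] by simp
  thus ?thesis unfolding \<delta>_def by simp
qed

lemma LP_frob:
  "(LP q n \<beta> (x::'a)) ^ (q ^ 2) = LP q n (\<lambda>e'. \<beta> ((e' + (2 * n - 2)) mod (2 * n)) ^ (q ^ 2)) x"
proof -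
  have "(LP q n \<beta> x) ^ (q ^ 2) = (\<Sum>e<2*n. \<beta> e ^ (q ^ 2) * x ^ (q ^ ((e + 2) mod (2 * n))))"
    unfolding LP_def fsum
  proof (intro sum.cong refl)
    fix e
    have "(x ^ (q ^ e)) ^ (q ^ 2) = x ^ (q ^ (e + 2))"
      by (simp only: power_mult[symmetric] power_add)
    also have "\<dots> = x ^ (q ^ ((e + 2) mod (2 * n)))" by (rule fred)
    finally show "(\<beta> e * x ^ (q ^ e)) ^ (q ^ 2) = \<beta> e ^ (q ^ 2) * x ^ (q ^ ((e + 2) mod (2 * n)))"
      by (simp only: power_mult_distrib)
  qed
  also have "\<dots> = LP q n (\<lambda>e'. \<beta> ((e' + (2 * n - 2)) mod (2 * n)) ^ (q ^ 2)) x"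
    unfolding LP_def
  proof (rule sum.reindex_bij_witness[of _ "\<lambda>e'. (e' + (2 * n - 2)) mod (2 * n)" "\<lambda>e. (e + 2) mod (2 * n)"])
    fix e' assume "e' \<in> {..<2*n}"
    hence e': "e' < 2 * n" by simp
    have "((e' + (2 * n - 2)) mod (2 * n) + 2) mod (2 * n) = (e' + (2 * n - 2) + 2) mod (2 * n)"
      by (rule mod_add_left_eq)
    also have "e' + (2 * n - 2) + 2 = e' + 2 * n" using n_pos by simp
    finally show "((e' + (2 * n - 2)) mod (2 * n) + 2) mod (2 * n) = e'" using e' by simp
    show "(e' + (2 * n - 2)) mod (2 * n) \<in> {..<2*n}" using n_pos by simp
  next
    fix e assume "e \<in> {..<2*n}"
    hence e: "e < 2 * n" by simp
    have "((e + 2) mod (2 * n) + (2 * n - 2)) mod (2 * n) = (e + 2 + (2 * n - 2)) mod (2 * n)"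
      by (rule mod_add_left_eq)
    also have "e + 2 + (2 * n - 2) = e + 2 * n" using n_pos by simp
    finally have *: "((e + 2) mod (2 * n) + (2 * n - 2)) mod (2 * n) = e" using e by simp
    show "((e + 2) mod (2 * n) + (2 * n - 2)) mod (2 * n) = e" by (rule *)
    show "(e + 2) mod (2 * n) \<in> {..<2*n}" using n_pos by simp
    show "\<beta> (((e + 2) mod (2 * n) + (2 * n - 2)) mod (2 * n)) ^ q\<^sup>2 * x ^ q ^ ((e + 2) mod (2 * n)) =
          \<beta> e ^ q\<^sup>2 * x ^ q ^ ((e + 2) mod (2 * n))" using * by simp
  qed
  finally show ?thesis .
qed

lemma LP_fixed_step:
  assumes "\<And>x::'a. (LP q n \<beta> x) ^ (q ^ 2) = LP q n \<beta> x" "e < 2 * n"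
  shows "\<beta> ((e + 2) mod (2 * n)) = \<beta> e ^ (q ^ 2)"
proof -
  have "\<beta> e' = \<beta> ((e' + (2 * n - 2)) mod (2 * n)) ^ (q ^ 2)" if "e' < 2 * n" for e'
    using LP_unique[of \<beta> "\<lambda>e'. \<beta> ((e' + (2 * n - 2)) mod (2 * n)) ^ (q ^ 2)" e'] assms(1) LP_frob that
    by metis
  moreover have "((e + 2) mod (2 * n) + (2 * n - 2)) mod (2 * n) = e"
  proof -
    have "((e + 2) mod (2 * n) + (2 * n - 2)) mod (2 * n) = (e + 2 + (2 * n - 2)) mod (2 * n)"
      by (rule mod_add_left_eq)
    also have "e + 2 + (2 * n - 2) = e + 2 * n" using n_pos by simp
    finally show ?thesis using assms(2) by simp
  qed
  moreover have "(e + 2) mod (2 * n) < 2 * n" using n_pos by simp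
  ultimately show ?thesis by metis
qed

lemma LP_fixed_iter:
  assumes "\<And>x::'a. (LP q n \<beta> x) ^ (q ^ 2) = LP q n \<beta> x" "e < 2 * n"
  shows "\<beta> ((e + 2 * t) mod (2 * n)) = \<beta> e ^ (q ^ (2 * t))"
proof (induction t)
  case 0 thus ?case using assms(2) by simp
next
  case (Suc t)
  have "e + 2 * Suc t = (e + 2 * t) + 2" by simp
  hence "(e + 2 * Suc t) mod (2 * n) = ((e + 2 * t) mod (2 * n) + 2) mod (2 * n)"
    by (simp only: mod_add_left_eq)
  hence "\<beta> ((e + 2 * Suc t) mod (2 * n)) = \<beta> ((e + 2 * t) mod (2 * n)) ^ (q ^ 2)"
    using LP_fixed_step[OF assms(1), of "(e + 2 * t) mod (2 * n)"] n_pos by simp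
  also have "\<dots> = \<beta> e ^ (q ^ (2 * Suc t))"
    using Suc by (simp add: power_mult[symmetric] power_add[symmetric] algebra_simps)
  finally show ?case .
qed

end

context
  fixes q n :: nat
  assumes q_gt1: "q > 1" and n_pos: "n > 0"
    and fadd: "\<And>(x::'a::{field,finite}) y j. (x + y) ^ (q ^ j) = x ^ (q ^ j) + y ^ (q ^ j)"
    and cardF: "CARD('a) = q ^ (2 * n)"
begin

lemma fdiff: "((x::'a) - y) ^ (q ^ j) = x ^ (q ^ j) - y ^ (q ^ j)"
  using fadd[of x "- y" j] fneg[OF q_gt1 n_pos fadd cardF, of y j] by simp

lemma roots_bound:
  assumes "N \<ge> 2"
  shows "card {x::'a. x ^ N = c * x} \<le> N"
proof -
  define p where "p = monom (1::'a) N - [:0, c:]"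
  have polyp: "poly p x = x ^ N - c * x" for x unfolding p_def by (simp add: poly_monom)
  have "coeff p N = 1" unfolding p_def using assms by (cases N) (auto simp: coeff_pCons split: nat.splits)
  hence pnz: "p \<noteq> 0" by auto
  have "degree p \<le> N" unfolding p_def
    by (rule degree_diff_le) (use assms in \<open>auto simp: degree_monom_le\<close>)
  moreover have "{x::'a. x ^ N = c * x} = {x. poly p x = 0}" by (auto simp: polyp)
  ultimately show ?thesis using card_poly_roots_bound[OF pnz] by simp
qed

lemma subfield_card: "card (subfield_el (q ^ n) :: 'a set) = q ^ n"
proof -
  define A where "A = (subfield_el (q ^ n) :: 'a set)"
  define D where "D = (\<lambda>x::'a. x ^ (q ^ n) - x)"
  have qn2: "q ^ n \<ge> 2"
    using q_gt1 n_pos by (metis Suc_1 Suc_leI less_le_trans linorder_not_le one_less_power power_one_right power_increasing)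
  have A_eq: "A = {x. x ^ (q ^ n) = 1 * x}" unfolding A_def subfield_el_def by simp
  have cA: "card A \<le> q ^ n" unfolding A_eq by (rule roots_bound[OF qn2])
  have Dimg: "D ` UNIV \<subseteq> {y. y ^ (q ^ n) = (-1) * y}"
  proof clarify
    fix x
    have "(D x) ^ (q ^ n) = x ^ (q ^ n * q ^ n) - x ^ (q ^ n)"
      unfolding D_def fdiff by (simp add: power_mult)
    also have "x ^ (q ^ n * q ^ n) = x"
      using fcard[OF q_gt1 n_pos fadd cardF, of x] by (simp add: power_add[symmetric] mult_2)
    finally show "(D x) ^ (q ^ n) = (-1) * D x" unfolding D_def by simp
  qed
  have cimg: "card (D ` UNIV) \<le> q ^ n"
    using card_mono[OF _ Dimg] roots_bound[OF qn2, of "-1"] by (meson finite order_trans)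
  have fib: "card {x. D x = y} \<le> card A" if "y \<in> D ` UNIV" for y
  proof -
    obtain x0 where x0: "y = D x0" using \<open>y \<in> D ` UNIV\<close> by auto
    have "{x. D x = y} \<subseteq> (\<lambda>a. x0 + a) ` A"
    proof
      fix x assume "x \<in> {x. D x = y}"
      hence "D x = D x0" using x0 by simp
      hence "D (x - x0) = 0" unfolding D_def fdiff by (simp add: algebra_simps)
      hence "x - x0 \<in> A" unfolding A_def subfield_el_def D_def by simp
      thus "x \<in> (\<lambda>a. x0 + a) ` A" by (intro image_eqI[of _ _ "x - x0"]) auto
    qed
    hence "card {x. D x = y} \<le> card ((\<lambda>a. x0 + a) ` A)" by (intro card_mono) auto
    also have "\<dots> \<le> card A" by (rule card_image_le) simp
    finally show ?thesis .
  qed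
  have "q ^ (2 * n) = card (UNIV :: 'a set)" using cardF by simp
  also have "(UNIV :: 'a set) = (\<Union>y\<in>D ` UNIV. {x. D x = y})" by auto
  also have "card \<dots> \<le> (\<Sum>y\<in>D ` UNIV. card {x. D x = y})" by (rule card_UN_le) simp
  also have "\<dots> \<le> card (D ` UNIV) * card A"
    using sum_bounded_above[of "D ` UNIV" "\<lambda>y. card {x. D x = y}" "card A"] fib by simp
  also have "\<dots> \<le> q ^ n * card A" using cimg by simp
  finally have "q ^ n * q ^ n \<le> q ^ n * card A" by (simp add: power_add[symmetric] mult_2)
  hence "q ^ n \<le> card A" using q_gt1 by simp
  thus ?thesis using cA unfolding A_def by simp
qed

end

definition pos :: "nat \<Rightarrow> int \<Rightarrow> nat \<Rightarrow> nat" where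
  "pos n s j = nat ((2 * s * int j) mod (2 * int n))"

definition alpha :: "nat \<Rightarrow> nat \<Rightarrow> int \<Rightarrow> 'a::field \<Rightarrow> 'a \<Rightarrow> 'a \<Rightarrow> (nat \<Rightarrow> 'a) \<Rightarrow> nat \<Rightarrow> 'a" where
  "alpha q n s \<gamma> a b c j =
    (if j \<le> (n - 3) div 2 then c j
     else if j = (n - 3) div 2 + 1 then a * \<gamma>
     else if j = (n - 3) div 2 + 2 then b
     else if j = (n - 3) div 2 + 3 then frob q n (s * (int n + 2)) (a * \<gamma>)
     else frob q n (s * (2 * int n - 2 * int (n + 1 - j) + 1)) (c (n + 1 - j)))"

definition Phi :: "nat \<Rightarrow> nat \<Rightarrow> int \<Rightarrow> 'a::field \<Rightarrow> 'a \<Rightarrow> 'a \<Rightarrow> (nat \<Rightarrow> 'a) \<Rightarrow> 'a \<Rightarrow> 'a" where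
  "Phi q n s \<gamma> a b c = (\<lambda>x. \<Sum>j\<in>{1..n}. alpha q n s \<gamma> a b c j * x ^ (q ^ pos n s j))"

lemma Phi_eq:
  fixes \<gamma> a b :: "'a::field"
  assumes "odd n" "n \<ge> 3"
  shows "(\<lambda>x. b * frob q n (2 * s * ((int n + 1) div 2)) x
        + a * \<gamma> * frob q n (2 * s * ((int n - 1) div 2)) x
        + frob q n (s * (int n + 2)) (a * \<gamma>) * frob q n (2 * s * ((int n + 3) div 2)) x
        + (\<Sum>i\<in>{1..(n - 3) div 2}.
             c i * frob q n (2 * s * int i) x
           + frob q n (s * (2 * int n - 2 * int i + 1)) (c i)
               * frob q n (2 * s * (int n - int i + 1)) x)) = Phi q n s \<gamma> a b c"
proof
  fix x :: 'a
  define m where "m = (n - 3) div 2"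
  have nm: "n = 2 * m + 3" using assms unfolding m_def by (auto elim!: oddE)
  define X where "X j = frob q n (2 * s * int j) x" for j
  define al where "al = alpha q n s \<gamma> a b c"
  have Xpos: "x ^ (q ^ pos n s j) = X j" for j unfolding X_def pos_def frob_def by simp
  have i1: "(int n + 1) div 2 = int (m + 2)" "(int n - 1) div 2 = int (m + 1)"
    "(int n + 3) div 2 = int (m + 3)" using nm by auto
  have i2: "int n - int i + 1 = int (n + 1 - i)" if "i \<in> {1..m}" for i using that nm by auto
  have setsplit: "{1..n} = {1..m} \<union> ({m+1, m+2, m+3} \<union> (\<lambda>i. n + 1 - i) ` {1..m})"
  proof (intro equalityI subsetI)
    fix j assume j: "j \<in> {1..n}"
    show "j \<in> {1..m} \<union> ({m+1, m+2, m+3} \<union> (\<lambda>i. n + 1 - i) ` {1..m})"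
    proof (cases "j \<le> m + 3")
      case True thus ?thesis using j by auto
    next
      case False
      hence "j = n + 1 - (n + 1 - j)" "n + 1 - j \<in> {1..m}" using j nm by auto
      thus ?thesis by blast
    qed
  next
    fix j assume "j \<in> {1..m} \<union> ({m+1, m+2, m+3} \<union> (\<lambda>i. n + 1 - i) ` {1..m})"
    thus "j \<in> {1..n}" using nm by auto
  qed
  have inj: "inj_on (\<lambda>i. n + 1 - i) {1..m}" by (rule inj_onI) (use nm in auto)
  have "Phi q n s \<gamma> a b c x = (\<Sum>j\<in>{1..n}. al j * X j)"
    unfolding Phi_def al_def Xpos by simp
  also have "\<dots> = (\<Sum>j\<in>{1..m}. al j * X j) + ((\<Sum>j\<in>{m+1, m+2, m+3}. al j * X j)
      + (\<Sum>j\<in>(\<lambda>i. n + 1 - i) ` {1..m}. al j * X j))"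
    unfolding setsplit using nm by (subst sum.union_disjoint, force, force, force)+ simp
  also have "(\<Sum>j\<in>{m+1, m+2, m+3}. al j * X j) = al (m+1) * X (m+1) + al (m+2) * X (m+2) + al (m+3) * X (m+3)"
    by (simp add: algebra_simps)
  also have "(\<Sum>j\<in>(\<lambda>i. n + 1 - i) ` {1..m}. al j * X j) = (\<Sum>i\<in>{1..m}. al (n + 1 - i) * X (n + 1 - i))"
    by (subst sum.reindex[OF inj]) simp
  also have "(\<Sum>i\<in>{1..m}. al (n + 1 - i) * X (n + 1 - i)) =
      (\<Sum>i\<in>{1..m}. frob q n (s * (2 * int n - 2 * int i + 1)) (c i) * frob q n (2 * s * (int n - int i + 1)) x)"
  proof (rule sum.cong[OF refl])
    fix i assume i: "i \<in> {1..m}"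
    have "al (n + 1 - i) = frob q n (s * (2 * int n - 2 * int i + 1)) (c i)"
      unfolding al_def alpha_def m_def[symmetric] using i nm by auto
    thus "al (n + 1 - i) * X (n + 1 - i) = frob q n (s * (2 * int n - 2 * int i + 1)) (c i) * frob q n (2 * s * (int n - int i + 1)) x"
      unfolding X_def using i2[OF i] by simp
  qed
  also have "(\<Sum>j\<in>{1..m}. al j * X j) = (\<Sum>i\<in>{1..m}. c i * frob q n (2 * s * int i) x)"
    by (rule sum.cong[OF refl]) (auto simp: al_def alpha_def m_def[symmetric] X_def)
  finally have eq: "Phi q n s \<gamma> a b c x = (\<Sum>i = 1..m. c i * frob q n (2 * s * int i) x) +
     (al (m + 1) * X (m + 1) + al (m + 2) * X (m + 2) + al (m + 3) * X (m + 3) +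
      (\<Sum>i = 1..m. frob q n (s * (2 * int n - 2 * int i + 1)) (c i) * frob q n (2 * s * (int n - int i + 1)) x))" .
  have alv: "al (m+1) = a * \<gamma>" "al (m+2) = b" "al (m+3) = frob q n (s * (int n + 2)) (a * \<gamma>)"
    unfolding al_def alpha_def m_def[symmetric] by auto
  show "b * frob q n (2 * s * ((int n + 1) div 2)) x
        + a * \<gamma> * frob q n (2 * s * ((int n - 1) div 2)) x
        + frob q n (s * (int n + 2)) (a * \<gamma>) * frob q n (2 * s * ((int n + 3) div 2)) x
        + (\<Sum>i\<in>{1..(n - 3) div 2}.
             c i * frob q n (2 * s * int i) x
           + frob q n (s * (2 * int n - 2 * int i + 1)) (c i)
               * frob q n (2 * s * (int n - int i + 1)) x) = Phi q n s \<gamma> a b c x"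
    unfolding i1 m_def[symmetric] sum.distrib eq alv by (simp add: algebra_simps X_def)
qed

lemma Htilde_eq:
  assumes "odd n" "n \<ge> 3"
  shows "Htilde q n s \<gamma> = {Phi q n s \<gamma> a b c | a b c. a \<in> subfield_el (q ^ n) \<and> b \<in> subfield_el (q ^ n)}"
  unfolding Htilde_def Phi_eq[OF assms] ..


definition beta :: "nat \<Rightarrow> nat \<Rightarrow> int \<Rightarrow> 'a::field \<Rightarrow> 'a \<Rightarrow> 'a \<Rightarrow> (nat \<Rightarrow> 'a) \<Rightarrow> nat \<Rightarrow> 'a" where
  "beta q n s \<gamma> a b c e = (\<Sum>j\<in>{j\<in>{1..n}. pos n s j = e}. alpha q n s \<gamma> a b c j)"

lemma pos_lt: "n > 0 \<Longrightarrow> pos n s j < 2 * n"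
  unfolding pos_def by (simp add: nat_less_iff)

lemma int_pos: "n > 0 \<Longrightarrow> int (pos n s j) = (2 * s * int j) mod (2 * int n)"
  unfolding pos_def by simp

lemma pos_inj:
  assumes "gcd s (2 * int n) = 1" "j \<in> {1..n}" "j' \<in> {1..n}" "pos n s j = pos n s j'"
  shows "j = j'"
proof -
  have n: "n > 0" using assms(2) by auto
  have "(2 * s * int j) mod (2 * int n) = (2 * s * int j') mod (2 * int n)"
    using int_pos[OF n, of s j] int_pos[OF n, of s j'] assms(4) by simp
  hence "2 * int n dvd 2 * s * int j - 2 * s * int j'" using mod_eq_dvd_iff by blast
  moreover have "2 * s * int j - 2 * s * int j' = 2 * (s * (int j - int j'))" by (simp add: algebra_simps)
  ultimately have "2 * int n dvd 2 * (s * (int j - int j'))" by simp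
  hence d: "int n dvd s * (int j - int j')" by simp
  have "coprime (int n) s" using assms(1) by (simp add: coprime_iff_gcd_eq_1[symmetric] ac_simps)
  hence "int n dvd int j - int j'" using d coprime_dvd_mult_right_iff[of "int n" s] by (simp add: mult.commute)
  moreover have "\<bar>int j - int j'\<bar> < int n" using assms(2,3) by auto
  ultimately show ?thesis
    by (metis abs_of_nat diff_self dvd_imp_le_int abs_dvd_iff linorder_not_le eq_iff_diff_eq_0 of_nat_eq_iff abs_ge_self order_trans)
qed

lemma pos_shift:
  assumes "n > 0"
  shows "(pos n s i + 2 * nat ((s * (int j - int i)) mod int n)) mod (2 * n) = pos n s j"
proof -
  have "int ((pos n s i + 2 * nat ((s * (int j - int i)) mod int n)) mod (2 * n))
      = ((2 * s * int i) mod (2 * int n) + 2 * ((s * (int j - int i)) mod int n)) mod (2 * int n)"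
    using assms by (simp add: int_pos zmod_int)
  also have "2 * ((s * (int j - int i)) mod int n) = (2 * (s * (int j - int i))) mod (2 * int n)"
    by (simp add: mod_mult_mult1)
  also have "((2 * s * int i) mod (2 * int n) + (2 * (s * (int j - int i))) mod (2 * int n)) mod (2 * int n)
      = (2 * s * int i + 2 * (s * (int j - int i))) mod (2 * int n)" by (rule mod_add_eq)
  also have "2 * s * int i + 2 * (s * (int j - int i)) = 2 * s * int j" by (simp add: algebra_simps)
  finally show ?thesis using int_pos[OF assms, of s j] by linarith
qed

lemma beta_pos:
  assumes "gcd s (2 * int n) = 1" "j \<in> {1..n}"
  shows "beta q n s \<gamma> a b c (pos n s j) = alpha q n s \<gamma> a b c j"
proof -
  have "{j'\<in>{1..n}. pos n s j' = pos n s j} = {j}" using pos_inj[OF assms(1) _ assms(2)] assms(2) by blast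
  thus ?thesis unfolding beta_def by simp
qed

lemma Phi_LP:
  assumes "n > 0"
  shows "Phi q n s \<gamma> a b c x = LP q n (beta q n s \<gamma> a b c) x"
proof -
  have "LP q n (beta q n s \<gamma> a b c) x
      = (\<Sum>e<2*n. \<Sum>j\<in>{j\<in>{1..n}. pos n s j = e}. alpha q n s \<gamma> a b c j * x ^ (q ^ pos n s j))"
    unfolding LP_def beta_def sum_distrib_right by (intro sum.cong refl) auto
  also have "\<dots> = (\<Sum>j\<in>{1..n}. alpha q n s \<gamma> a b c j * x ^ (q ^ pos n s j))"
    by (rule sum.group) (use pos_lt[OF assms] in auto)
  finally show ?thesis unfolding Phi_def by simp
qed

definition S :: "nat \<Rightarrow> nat \<Rightarrow> nat" where "S q k = (\<Sum>i<k. q ^ i)"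

lemma geo: "q \<ge> 1 \<Longrightarrow> q ^ k = 1 + (q - 1) * S q k"
proof (induction k)
  case (Suc k)
  have "q ^ Suc k = q * (1 + (q - 1) * S q k)" using Suc by simp
  moreover have "S q (Suc k) = 1 + q * S q k"
  proof -
    have "S q (Suc k) = S q k + q ^ k" by (simp add: S_def)
    also have "\<dots> = 1 + q * S q k" using Suc by (cases q) auto
    finally show ?thesis .
  qed
  ultimately show ?case using Suc.prems by (cases q) (auto simp: algebra_simps)
qed (simp add: S_def)

lemma E_eq: "q > 1 \<Longrightarrow> (q ^ k - 1) div (q - 1) = S q k"
  using geo[of q k] by simp

lemma S_split: assumes "q > 1" shows "S q (2 * n) = S q n * (q ^ n + 1)"
proof -
  have a: "q ^ (2 * n) = 1 + (q - 1) * S q (2 * n)" using geo assms by simp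
  have b: "q ^ n = 1 + (q - 1) * S q n" using geo assms by simp
  have "q ^ (2 * n) = q ^ n * q ^ n" by (simp add: power_add[symmetric] mult_2)
  hence "1 + (q - 1) * S q (2 * n) = (1 + (q - 1) * S q n) * (1 + (q - 1) * S q n)" using a b by simp
  hence "(q - 1) * S q (2 * n) = (q - 1) * (S q n * (2 + (q - 1) * S q n))" by (simp add: algebra_simps)
  hence "S q (2 * n) = S q n * (2 + (q - 1) * S q n)" using assms by simp
  thus ?thesis using b by simp
qed

lemma norm_fixed:
  fixes z :: "'a::field"
  assumes "q > 1" "z ^ (q ^ k) = z"
  shows "(z ^ S q k) ^ q = z ^ S q k"
proof (cases "z = 0")
  case True thus ?thesis using assms(1) by (cases "S q k = 0") (auto simp: power_0_left)
next
  case False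
  have qk: "q ^ k \<ge> 1" using assms(1) by simp
  have "z * z ^ (q ^ k - 1) = z ^ (q ^ k)" using qk by (metis Suc_diff_1 less_le_trans zero_less_one power_Suc)
  hence z1: "z ^ (q ^ k - 1) = 1" using assms(2) False by simp
  have "S q k * q = S q k + (q - 1) * S q k" using assms(1) by (cases q) (auto simp: algebra_simps)
  also have "(q - 1) * S q k = q ^ k - 1" using geo[of q k] assms(1) by simp
  finally have "(z ^ S q k) ^ q = z ^ S q k * z ^ (q ^ k - 1)" by (simp add: power_mult[symmetric] power_add)
  thus ?thesis using z1 by simp
qed

lemma fixed_iter: "(y::'a::field) ^ q = y \<Longrightarrow> y ^ (q ^ k) = y"
  by (induction k) (auto simp: power_mult)

lemma norm_sub:
  fixes a :: "'a::field"
  assumes "q > 1" "a ^ (q ^ n) = a"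
  shows "a ^ S q (2 * n) = (a ^ S q n) ^ 2"
proof -
  have "a ^ S q (2 * n) = a ^ (S q n * q ^ n + S q n)" using S_split[OF assms(1)] by (simp add: algebra_simps)
  also have "\<dots> = (a ^ (q ^ n)) ^ S q n * a ^ S q n" by (metis power_add power_mult mult.commute)
  finally show ?thesis using assms(2) by (simp add: power2_eq_square)
qed


context
  fixes q n :: nat
  assumes q_gt1: "q > 1" and n_pos: "n > 0"
    and fadd: "\<And>(x::'a::{field,finite}) y j. (x + y) ^ (q ^ j) = x ^ (q ^ j) + y ^ (q ^ j)"
    and cardF: "CARD('a) = q ^ (2 * n)"
begin

lemmas fneg' = fneg[OF q_gt1 n_pos fadd cardF]
lemmas fcard' = fcard[OF q_gt1 n_pos fadd cardF]

lemma rank_ge2: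
  fixes \<gamma> a b :: 'a and c :: "nat \<Rightarrow> 'a"
  assumes n3: "odd n" "n \<ge> 3" and cop: "gcd s (2 * int n) = 1"
    and nonsq: "\<not> (\<exists>y::'a. y ^ q = y \<and> y ^ 2 = normq q n \<gamma>)"
    and a: "a \<in> subfield_el (q ^ n)" and b: "b \<in> subfield_el (q ^ n)"
    and nz: "Phi q n s \<gamma> a b c \<noteq> (\<lambda>x. 0)"
  shows "hrank q (Phi q n s \<gamma> a b c) \<ge> 2"
proof (rule ccontr)
  assume lt: "\<not> 2 \<le> hrank q (Phi q n s \<gamma> a b c)"
  define f where "f = Phi q n s \<gamma> a b c"
  obtain x0 where x0: "f x0 \<noteq> 0" using nz unfolding f_def by (auto simp: fun_eq_iff)
  define v0 where "v0 = f x0"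
  have v0nz: "v0 \<noteq> 0" using x0 v0_def by simp
  define K where "K = (subfield_el (q ^ 2) :: 'a set)"
  have Kfin: "finite {card S | S. S \<subseteq> range f \<and> lin_indep_over K S}"
  proof (rule finite_subset[of _ "{..CARD('a)}"])
    show "{card S | S. S \<subseteq> range f \<and> lin_indep_over K S} \<subseteq> {..CARD('a)}"
      using card_mono[of "UNIV::'a set"] by auto
  qed simp
  have fixf: "(f x / v0) ^ (q ^ 2) = f x / v0" for x
  proof (rule ccontr)
    assume ne: "(f x / v0) ^ (q ^ 2) \<noteq> f x / v0"
    define y where "y = f x"
    have yv: "y \<noteq> v0"
    proof
      assume "y = v0"
      hence "f x / v0 = 1" using v0nz y_def by simp
      thus False using ne by simp
    qed
    have li: "lin_indep_over K {v0, y}"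
      unfolding lin_indep_over_def
    proof (intro conjI allI impI ballI)
      show "finite {v0, y}" by simp
      fix cc :: "'a \<Rightarrow> 'a" and v
      assume cK: "\<forall>v\<in>{v0, y}. cc v \<in> K" and sm: "(\<Sum>v\<in>{v0, y}. cc v * v) = 0" and v: "v \<in> {v0, y}"
      have sum2: "cc v0 * v0 + cc y * y = 0" using sm yv by simp
      have cy: "cc y = 0"
      proof (rule ccontr)
        assume cy: "cc y \<noteq> 0"
        have "cc y * y = - (cc v0 * v0)" using sum2 by (simp add: eq_neg_iff_add_eq_0 add.commute)
        hence "y / v0 = - (cc v0 / cc y)" using cy v0nz by (simp add: field_simps)
        moreover have "(- (cc v0 / cc y)) ^ (q ^ 2) = - (cc v0 / cc y)"
        proof -
          have "cc v0 ^ (q ^ 2) = cc v0" "cc y ^ (q ^ 2) = cc y" using cK unfolding K_def subfield_el_def by auto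
          thus ?thesis by (simp add: fneg' power_divide)
        qed
        ultimately show False using ne y_def by simp
      qed
      hence "cc v0 = 0" using sum2 v0nz by simp
      thus "cc v = 0" using cy v by auto
    qed
    have "card {v0, y} \<in> {card S | S. S \<subseteq> range f \<and> lin_indep_over K S}"
      using li v0_def y_def by blast
    hence "card {v0, y} \<le> hrank q f" unfolding hrank_def dim_over_def K_def[symmetric]
      by (rule Max_ge[OF Kfin])
    thus False using yv lt f_def by simp
  qed
  define \<beta> where "\<beta> = (\<lambda>e. beta q n s \<gamma> a b c e / v0)"
  have LPg: "LP q n \<beta> x = f x / v0" for x
    unfolding f_def Phi_LP[OF n_pos] LP_def \<beta>_def by (simp add: sum_divide_distrib)
  have fixLP: "(LP q n \<beta> x) ^ (q ^ 2) = LP q n \<beta> x" for x using fixf LPg by simp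
  define m where "m = (n - 3) div 2"
  have nm: "n = 2 * m + 3" using n3 unfolding m_def by (auto elim!: oddE)
  define i0 where "i0 = m + 1"
  have i0n: "i0 \<in> {1..n}" using nm i0_def by auto
  define u where "u = a * \<gamma> / v0"
  define T where "T j = nat ((s * (int j - int i0)) mod int n)" for j
  have key: "alpha q n s \<gamma> a b c j / v0 = u ^ (q ^ (2 * T j))" if j: "j \<in> {1..n}" for j
  proof -
    have "\<beta> ((pos n s i0 + 2 * T j) mod (2 * n)) = \<beta> (pos n s i0) ^ (q ^ (2 * T j))"
      by (rule LP_fixed_iter[OF q_gt1 n_pos fadd cardF fixLP pos_lt[OF n_pos]])
    moreover have "(pos n s i0 + 2 * T j) mod (2 * n) = pos n s j"
      unfolding T_def by (rule pos_shift[OF n_pos])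
    moreover have "\<beta> (pos n s j) = alpha q n s \<gamma> a b c j / v0"
      unfolding \<beta>_def using beta_pos[OF cop j, where q=q and \<gamma>=\<gamma> and a=a and b=b and c=c] by simp
    moreover have "\<beta> (pos n s i0) = u"
      unfolding \<beta>_def u_def using beta_pos[OF cop i0n, where q=q and \<gamma>=\<gamma> and a=a and b=b and c=c] by (simp add: alpha_def i0_def m_def)
    ultimately show ?thesis by simp
  qed
  have qpos: "q ^ k > 0" for k using q_gt1 by simp
  show False
  proof (cases "u = 0")
    case True
    have "alpha q n s \<gamma> a b c j = 0" if "j \<in> {1..n}" for j
      using key[OF that] True v0nz q_gt1 by (simp add: power_0_left)
    hence "f x0 = 0" unfolding f_def Phi_def by simp
    thus False using x0 by simp
  next
    case False
    define t where "t = T (m + 2)"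
    have bu: "b / v0 = u ^ (q ^ (2 * t))"
    proof -
      have "alpha q n s \<gamma> a b c (m + 2) = b" unfolding alpha_def m_def[symmetric] by simp
      moreover have "m + 2 \<in> {1..n}" using nm by simp
      ultimately show ?thesis using key[of "m + 2"] unfolding t_def by simp
    qed
    have anz: "a \<noteq> 0" and gnz: "\<gamma> \<noteq> 0" using False u_def by auto
    define N where "N z = z ^ S q (2 * n)" for z :: 'a
    have normN: "normq q n \<gamma> = N \<gamma>" unfolding normq_def N_def E_eq[OF q_gt1] ..
    have Nu: "N u ^ q = N u" unfolding N_def by (rule norm_fixed[OF q_gt1 fcard'])
    have NuQ: "N (u ^ (q ^ (2 * t))) = N u"
      unfolding N_def using fixed_iter[OF Nu[unfolded N_def], of "2 * t"]
      by (simp add: power_mult[symmetric] mult.commute)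
    have eq: "a * \<gamma> * u ^ (q ^ (2 * t)) = b * u"
    proof -
      have "a * \<gamma> = v0 * u" using u_def v0nz by simp
      moreover have "b = v0 * u ^ (q ^ (2 * t))" using bu v0nz by (simp add: field_simps)
      ultimately show ?thesis by simp
    qed
    hence "N a * N \<gamma> * N u = N b * N u"
      using NuQ unfolding N_def by (metis power_mult_distrib)
    moreover have "N u \<noteq> 0" using False unfolding N_def by simp
    ultimately have NaNg: "N a * N \<gamma> = N b" by simp
    have aq: "a ^ (q ^ n) = a" and bq: "b ^ (q ^ n) = b" using a b unfolding subfield_el_def by auto
    define ya where "ya = a ^ S q n"
    define yb where "yb = b ^ S q n"
    have Na: "N a = ya ^ 2" unfolding N_def ya_def by (rule norm_sub[OF q_gt1 aq])
    have Nb: "N b = yb ^ 2" unfolding N_def yb_def by (rule norm_sub[OF q_gt1 bq])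
    have yaq: "ya ^ q = ya" unfolding ya_def by (rule norm_fixed[OF q_gt1 aq])
    have ybq: "yb ^ q = yb" unfolding yb_def by (rule norm_fixed[OF q_gt1 bq])
    have yanz: "ya \<noteq> 0" using anz ya_def by simp
    define y where "y = yb / ya"
    have "y ^ q = y" unfolding y_def by (simp add: power_divide yaq ybq)
    moreover have "y ^ 2 = normq q n \<gamma>"
      unfolding normN y_def using NaNg Na Nb yanz by (simp add: power_divide field_simps)
    ultimately show False using nonsq by blast
  qed
qed

end

lemma frob_mul: "frob q n k ((x::'a::field) * y) = frob q n k x * frob q n k y"
  unfolding frob_def by (simp add: power_mult_distrib)

lemma frob_fix: "(t::'a::field) ^ q = t \<Longrightarrow> frob q n k t = t"
  unfolding frob_def by (rule fixed_iter)

lemma frob_0: "q > 0 \<Longrightarrow> frob q n k (0::'a::field) = 0"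
  unfolding frob_def by simp

lemma alpha_smult:
  "(t::'a::field) ^ q = t \<Longrightarrow> alpha q n s \<gamma> (t * a) (t * b) (\<lambda>i. t * c i) j = t * alpha q n s \<gamma> a b c j"
  unfolding alpha_def by (simp add: frob_mul frob_fix mult.assoc)

lemma alpha_zero: "q > 0 \<Longrightarrow> alpha q n s \<gamma> 0 0 (\<lambda>_. 0::'a::field) j = 0"
  unfolding alpha_def by (simp add: frob_0)

lemma Phi_smult:
  "(t::'a::field) ^ q = t \<Longrightarrow> Phi q n s \<gamma> (t * a) (t * b) (\<lambda>i. t * c i) = (\<lambda>x. t * Phi q n s \<gamma> a b c x)"
  unfolding Phi_def by (simp add: alpha_smult sum_distrib_left mult.assoc)

lemma Phi_zero: "q > 0 \<Longrightarrow> Phi q n s \<gamma> 0 0 (\<lambda>_. 0::'a::field) = (\<lambda>x. 0)"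
  unfolding Phi_def by (simp add: alpha_zero)

lemma sub_smult: "(t::'a::field) ^ q = t \<Longrightarrow> a \<in> subfield_el (q ^ n) \<Longrightarrow> t * a \<in> subfield_el (q ^ n)"
  unfolding subfield_el_def by (simp add: power_mult_distrib fixed_iter)

lemma Phi_restrict:
  assumes "odd n" "n \<ge> 3"
  shows "Phi q n s \<gamma> a b c = Phi q n s \<gamma> a b (restrict c {1..(n - 3) div 2})"
  unfolding Phi_def
proof (intro ext sum.cong refl)
  fix x j assume j: "j \<in> {1..n}"
  define m where "m = (n - 3) div 2"
  have nm: "n = 2 * m + 3" using assms unfolding m_def by (auto elim!: oddE)
  show "alpha q n s \<gamma> a b c j * x ^ q ^ pos n s j =
        alpha q n s \<gamma> a b (restrict c {1..(n - 3) div 2}) j * x ^ q ^ pos n s j"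
  proof -
    have "alpha q n s \<gamma> a b c j = alpha q n s \<gamma> a b (restrict c {1..m}) j"
    proof (cases "j \<le> m + 3")
      case True
      thus ?thesis using j unfolding alpha_def m_def[symmetric] by (simp add: restrict_def)
    next
      case False
      hence "1 \<le> n + 1 - j" "n + 1 - j \<le> m" using j nm by auto
      hence "n + 1 - j \<in> {1..m}" by simp
      thus ?thesis using False unfolding alpha_def m_def[symmetric] by (simp add: restrict_def)
    qed
    thus ?thesis unfolding m_def by simp
  qed
qed

context
  fixes q n :: nat
  assumes q_gt1: "q > 1" and n_pos: "n > 0"
    and fadd: "\<And>(x::'a::{field,finite}) y j. (x + y) ^ (q ^ j) = x ^ (q ^ j) + y ^ (q ^ j)"
    and cardF: "CARD('a) = q ^ (2 * n)"
begin

lemma frob_add': "frob q n k ((x::'a) + y) = frob q n k x + frob q n k y"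
  unfolding frob_def by (rule fadd)

lemma alpha_add:
  "alpha q n s \<gamma> (a + a') (b + b') (\<lambda>i. c i + c' i) j = alpha q n s \<gamma> a b c j + alpha q n s \<gamma> a' b' c' (j::nat)"
  for a a' b b' \<gamma> :: 'a
  unfolding alpha_def by (simp add: frob_add' distrib_right)

lemma Phi_add:
  "Phi q n s \<gamma> (a + a') (b + b') (\<lambda>i. c i + c' i) = (\<lambda>x. Phi q n s \<gamma> a b c x + Phi q n s \<gamma> a' b' c' x)"
  for a a' b b' \<gamma> :: 'a
  unfolding Phi_def by (simp add: alpha_add distrib_right sum.distrib)

lemma sub_add: "a \<in> subfield_el (q ^ n) \<Longrightarrow> a' \<in> subfield_el (q ^ n) \<Longrightarrow> (a::'a) + a' \<in> subfield_el (q ^ n)"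
  unfolding subfield_el_def by (simp add: fadd power_mult[symmetric] power_add[symmetric])

lemma card_Htilde:
  fixes \<gamma> :: 'a
  assumes n3: "odd n" "n \<ge> 3" and cop: "gcd s (2 * int n) = 1" and gnz: "\<gamma> \<noteq> 0"
  shows "card (Htilde q n s \<gamma>) = q ^ (n * (n - 1))"
proof -
  define m where "m = (n - 3) div 2"
  have nm: "n = 2 * m + 3" using n3 unfolding m_def by (auto elim!: oddE)
  define A where "A = (subfield_el (q ^ n) :: 'a set)"
  define Dom where "Dom = A \<times> A \<times> PiE {1..m} (\<lambda>_. (UNIV :: 'a set))"
  define F where "F = (\<lambda>(a, b, c). Phi q n s \<gamma> a b c)"
  have img: "Htilde q n s \<gamma> = F ` Dom"
  proof -
    have "Htilde q n s \<gamma> = {Phi q n s \<gamma> a b c | a b c. a \<in> A \<and> b \<in> A}"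
      unfolding Htilde_eq[OF n3] A_def ..
    also have "\<dots> = F ` Dom"
    proof (intro equalityI subsetI)
      fix f assume "f \<in> {Phi q n s \<gamma> a b c | a b c. a \<in> A \<and> b \<in> A}"
      then obtain a b c where f: "f = Phi q n s \<gamma> a b c" "a \<in> A" "b \<in> A" unfolding mem_Collect_eq by metis
      have "Phi q n s \<gamma> a b c = Phi q n s \<gamma> a b (restrict c {1..m})"
        unfolding m_def by (rule Phi_restrict[OF n3])
      hence "f = F (a, b, restrict c {1..m})" unfolding F_def f(1) by (simp only: prod.case)
      moreover have "(a, b, restrict c {1..m}) \<in> Dom" unfolding Dom_def using f by auto
      ultimately show "f \<in> F ` Dom" by blast
    next
      fix f assume "f \<in> F ` Dom"
      thus "f \<in> {Phi q n s \<gamma> a b c | a b c. a \<in> A \<and> b \<in> A}" unfolding F_def Dom_def by auto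
    qed
    finally show ?thesis .
  qed
  have inj: "inj_on F Dom"
  proof (rule inj_onI)
    fix X Y assume X: "X \<in> Dom" and Y: "Y \<in> Dom" and FXY: "F X = F Y"
    obtain a b c where Xe: "X = (a, b, c)" by (cases X) auto
    obtain a' b' c' where Ye: "Y = (a', b', c')" by (cases Y) auto
    have al: "alpha q n s \<gamma> a b c j = alpha q n s \<gamma> a' b' c' j" if j: "j \<in> {1..n}" for j
    proof -
      have "\<And>x. LP q n (beta q n s \<gamma> a b c) x = LP q n (beta q n s \<gamma> a' b' c') x"
        using FXY unfolding F_def Xe Ye by (simp add: Phi_LP[OF n_pos, symmetric])
      hence "beta q n s \<gamma> a b c (pos n s j) = beta q n s \<gamma> a' b' c' (pos n s j)"
        by (rule LP_unique[OF q_gt1 n_pos fadd cardF]) (rule pos_lt[OF n_pos])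
      thus ?thesis using beta_pos[OF cop j] by metis
    qed
    have "b = b'" using al[of "m + 2"] nm unfolding alpha_def m_def[symmetric] by simp
    moreover have "a = a'" using al[of "m + 1"] nm gnz unfolding alpha_def m_def[symmetric] by simp
    moreover have "c = c'"
    proof (rule PiE_ext)
      show "c \<in> PiE {1..m} (\<lambda>_. UNIV)" "c' \<in> PiE {1..m} (\<lambda>_. UNIV)" using X Y Xe Ye Dom_def by auto
      fix i assume i: "i \<in> {1..m}"
      show "c i = c' i" using al[of i] i nm unfolding alpha_def m_def[symmetric] by simp
    qed
    ultimately show "X = Y" using Xe Ye by simp
  qed
  have cA: "card A = q ^ n" unfolding A_def by (rule subfield_card[OF q_gt1 n_pos fadd cardF])
  have "card (Htilde q n s \<gamma>) = card Dom" unfolding img by (rule card_image[OF inj])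
  also have "\<dots> = q ^ n * (q ^ n * (q ^ (2 * n)) ^ m)"
    unfolding Dom_def by (simp add: card_cartesian_product card_PiE cA cardF)
  also have "\<dots> = q ^ (n * (n - 1))"
  proof -
    have e: "n * (n - 1) = n + (n + 2 * n * m)" using nm by (simp add: algebra_simps)
    show ?thesis unfolding e power_add power_mult by (rule refl)
  qed
  finally show ?thesis .
qed

end

theorem theorem6p2:
  fixes q n :: nat and s :: int and \<gamma> :: "'a::{field,finite}"
  assumes q_pp: "\<exists>p k. prime p \<and> k > 0 \<and> q = p ^ k"
    and q_odd: "odd q"
    and n_ge: "n \<ge> 3" and n_odd: "odd n"
    and s_cop: "gcd s (2 * int n) = 1"
    and card_field: "CARD('a) = q ^ (2 * n)"
    and nonsq: "\<not> (\<exists>y::'a. y ^ q = y \<and> y ^ 2 = normq q n \<gamma>)"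
  shows "(\<lambda>x. 0) \<in> Htilde q n s \<gamma>
    \<and> (\<forall>f\<in>Htilde q n s \<gamma>. \<forall>g\<in>Htilde q n s \<gamma>. (\<lambda>x. f x + g x) \<in> Htilde q n s \<gamma>)
    \<and> (\<forall>t\<in>subfield_el q. \<forall>f\<in>Htilde q n s \<gamma>. (\<lambda>x. t * f x) \<in> Htilde q n s \<gamma>)
    \<and> card (Htilde q n s \<gamma>) = q ^ (n * (n - 1))
    \<and> (\<forall>f\<in>Htilde q n s \<gamma>. f \<noteq> (\<lambda>x. 0) \<longrightarrow> hrank q f \<ge> 2)"
proof -
  obtain p k where pk: "prime p" "k > 0" "q = p ^ k" using q_pp by blast
  have q_gt1: "q > 1" using pk prime_gt_1_nat one_less_power by blast
  have n_pos: "n > 0" using n_ge by simp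
  have cardp: "CARD('a) = p ^ (k * (2 * n))" using card_field pk(3) by (simp add: power_mult)
  have ch: "CHAR('a) = p" by (rule char_prime_eq[OF pk(1) _ cardp]) (use pk(2) n_pos in simp)
  have fadd: "\<And>(x::'a) y j. (x + y) ^ (q ^ j) = x ^ (q ^ j) + y ^ (q ^ j)"
    by (rule frob_add_pow[OF pk(1) ch pk(3)])
  have gnz: "\<gamma> \<noteq> 0"
  proof
    assume g0: "\<gamma> = 0"
    have "S q (2 * n) > 0" unfolding S_def using n_pos by (intro sum_pos2[of _ 0]) auto
    hence "normq q n \<gamma> = 0" unfolding normq_def E_eq[OF q_gt1] g0 by simp
    moreover have "(0::'a) ^ q = 0" using q_gt1 by simp
    ultimately show False using nonsq by auto
  qed
  have HE: "Htilde q n s \<gamma> = {Phi q n s \<gamma> a b c | a b c. a \<in> subfield_el (q ^ n) \<and> b \<in> subfield_el (q ^ n)}"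
    by (rule Htilde_eq[OF n_odd n_ge])
  have z: "(0::'a) \<in> subfield_el (q ^ n)" unfolding subfield_el_def using q_gt1 by simp
  show ?thesis
  proof (intro conjI ballI impI)
    have P0: "(\<lambda>x. 0) = Phi q n s \<gamma> 0 0 (\<lambda>_. 0)" using Phi_zero[of q n s \<gamma>] q_gt1 by simp
    show "(\<lambda>x. 0) \<in> Htilde q n s \<gamma>"
      unfolding HE mem_Collect_eq using z P0 by blast
  next
    fix f g :: "'a \<Rightarrow> 'a" assume "f \<in> Htilde q n s \<gamma>" "g \<in> Htilde q n s \<gamma>"
    then obtain a b c a' b' c' where f: "f = Phi q n s \<gamma> a b c" "a \<in> subfield_el (q ^ n)" "b \<in> subfield_el (q ^ n)"
      and g: "g = Phi q n s \<gamma> a' b' c'" "a' \<in> subfield_el (q ^ n)" "b' \<in> subfield_el (q ^ n)"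
      unfolding HE mem_Collect_eq by metis
    have "(\<lambda>x. f x + g x) = Phi q n s \<gamma> (a + a') (b + b') (\<lambda>i. c i + c' i)"
      unfolding f g by (rule Phi_add[OF q_gt1 n_pos fadd card_field, symmetric])
    moreover have "a + a' \<in> subfield_el (q ^ n)" "b + b' \<in> subfield_el (q ^ n)"
      using sub_add[OF q_gt1 n_pos fadd card_field] f g by auto
    ultimately show "(\<lambda>x. f x + g x) \<in> Htilde q n s \<gamma>" unfolding HE by blast
  next
    fix t :: 'a and f :: "'a \<Rightarrow> 'a" assume t: "t \<in> subfield_el q" and "f \<in> Htilde q n s \<gamma>"
    then obtain a b c where f: "f = Phi q n s \<gamma> a b c" "a \<in> subfield_el (q ^ n)" "b \<in> subfield_el (q ^ n)"
      unfolding HE mem_Collect_eq by metis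
    have tq: "t ^ q = t" using t unfolding subfield_el_def by simp
    have "(\<lambda>x. t * f x) = Phi q n s \<gamma> (t * a) (t * b) (\<lambda>i. t * c i)"
      unfolding f by (rule Phi_smult[OF tq, symmetric])
    moreover have "t * a \<in> subfield_el (q ^ n)" "t * b \<in> subfield_el (q ^ n)"
      using sub_smult[OF tq] f by auto
    ultimately show "(\<lambda>x. t * f x) \<in> Htilde q n s \<gamma>" unfolding HE by blast
  next
    show "card (Htilde q n s \<gamma>) = q ^ (n * (n - 1))"
      by (rule card_Htilde[OF q_gt1 n_pos fadd card_field n_odd n_ge s_cop gnz])
  next
    fix f assume "f \<in> Htilde q n s \<gamma>" and fnz: "f \<noteq> (\<lambda>x. 0)"
    then obtain a b c where f: "f = Phi q n s \<gamma> a b c" "a \<in> subfield_el (q ^ n)" "b \<in> subfield_el (q ^ n)"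
      unfolding HE mem_Collect_eq by metis
    show "hrank q f \<ge> 2" unfolding f(1)
      by (rule rank_ge2[OF q_gt1 n_pos fadd card_field n_odd n_ge s_cop nonsq f(2) f(3)]) (use fnz f(1) in simp)
  qed
qed


end
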